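(* Let $\mathscr{B}$ be a minimal balanced collection on $N$ and $S'\in\mathscr{B}$. Let $z\in\mathbb{R}^N_+$ with $z\neq\mathbf{1}^{S'}$ and $z_i>0$ if and only if $i\in S'$, and let $Z=\{\mathbf{1}^S\mid S\in\mathscr{B}\setminus\{S'\}\}\cup\{z\}$. If $Z$ is a minimal balanced set, then (a) there exists a vector $y$ in the orthogonal complement of $\mathrm{span}\{\mathbf{1}^S\mid S\in\mathscr{B}\setminus\{S'\}\}$ with $z\cdot y\neq0$, and (b) $z\in\mathrm{span}\{\mathbf{1}^S\mid S\in\mathscr{B}\}$.
   Context: $\mathbf{1}^S\in\mathbb{R}^N$ is the characteristic vector of $S\subseteq N$, $\mathbb{R}^N_+$ the nonnegative orthant. A collection $\mathscr{B}$ of nonempty subsets of $N$ is balanced if there exist positive weights $(\lambda_S)$ with $\sum_{S\in\mathscr{B}}\lambda_S\mathbf{1}^S=\mathbf{1}^N$, and minimal if no proper subcollection is balanced. A finite set $Z\subseteq\mathbb{R}^N_+\setminus\{0\}$ is a balanced set if there exist positive weights $(\delta_w)_{w\in Z}$ with $\sum_{w\in Z}\delta_w w=\mathbf{1}^N$; it is a minimal balanced set if no proper subset of $Z$ is balanced. *)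

theory Defs
  imports "HOL-Analysis.Analysis"
begin

text \<open>The player set N is the (finite) universe of the index type 'n;
  vectors in R^N are elements of real^'n.\<close>

definition charvec :: "'n::finite set \<Rightarrow> real^'n" where
  "charvec S = (\<chi> i. if i \<in> S then 1 else 0)"

definition balanced_collection :: "'n::finite set set \<Rightarrow> bool" where
  "balanced_collection B \<longleftrightarrow> (\<forall>S\<in>B. S \<noteq> {}) \<and>
     (\<exists>lam::'n set \<Rightarrow> real. (\<forall>S\<in>B. lam S > 0) \<and>
        (\<Sum>S\<in>B. lam S *\<^sub>R charvec S) = charvec (UNIV::'n set))"

definition minimal_balanced_collection :: "'n::finite set set \<Rightarrow> bool" where
  "minimal_balanced_collection B \<longleftrightarrow> balanced_collection B \<and>
     (\<forall>C. C \<subset> B \<longrightarrow> \<not> balanced_collection C)"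

definition nonneg_orthant :: "(real^'n::finite) set" where
  "nonneg_orthant = {x. \<forall>i. x $ i \<ge> 0}"

definition balanced_set :: "(real^'n::finite) set \<Rightarrow> bool" where
  "balanced_set Z \<longleftrightarrow> finite Z \<and> Z \<subseteq> nonneg_orthant - {0} \<and>
     (\<exists>\<delta>::real^'n \<Rightarrow> real. (\<forall>w\<in>Z. \<delta> w > 0) \<and>
        (\<Sum>w\<in>Z. \<delta> w *\<^sub>R w) = charvec (UNIV::'n set))"

definition minimal_balanced_set :: "(real^'n::finite) set \<Rightarrow> bool" where
  "minimal_balanced_set Z \<longleftrightarrow> balanced_set Z \<and>
     (\<forall>Y. Y \<subset> Z \<longrightarrow> \<not> balanced_set Y)"

end

theory Submission
  imports Defs
begin

lemma perturb:
  fixes Z :: "(real^'n::finite) set"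
  assumes fin: "finite Z" and dpos: "\<forall>w\<in>Z. d w > 0" and dsum: "(\<Sum>w\<in>Z. d w *\<^sub>R w) = v"
    and dep: "dependent Z"
  shows "\<exists>Y d'. Y \<subset> Z \<and> (\<forall>w\<in>Y. d' w > 0) \<and> (\<Sum>w\<in>Y. d' w *\<^sub>R w) = v"
proof -
  obtain u where u1: "\<exists>x\<in>Z. u x \<noteq> 0" and u2: "(\<Sum>w\<in>Z. u w *\<^sub>R w) = 0"
    using dep dependent_finite[OF fin] by auto
  obtain c where c1: "\<exists>x\<in>Z. c x > 0" and c2: "(\<Sum>w\<in>Z. c w *\<^sub>R w) = 0"
  proof (cases "\<exists>x\<in>Z. u x > 0")
    case True then show ?thesis using that[of u] u2 by blast
  next
    case False
    then obtain x where "x \<in> Z" "-u x > 0" using u1 by force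
    moreover have "(\<Sum>w\<in>Z. (- u w) *\<^sub>R w) = 0"
      using u2 by (simp add: sum_negf)
    ultimately show ?thesis using that[of "\<lambda>w. - u w"] by blast
  qed
  define P where "P = {w\<in>Z. c w > 0}"
  have Pfin: "finite P" and Pne: "P \<noteq> {}" using fin c1 by (auto simp: P_def)
  define t where "t = Min ((\<lambda>w. d w / c w) ` P)"
  have "t \<in> (\<lambda>w. d w / c w) ` P"
    unfolding t_def using Pfin Pne by (intro Min_in) auto
  then obtain w0 where w0: "w0 \<in> P" "t = d w0 / c w0" by blast
  have tle: "t \<le> d w / c w" if "w \<in> P" for w
    using Pfin that unfolding t_def by auto
  define d' where "d' w = d w - t * c w" for w
  have d'nn: "d' w \<ge> 0" if "w \<in> Z" for w
  proof (cases "c w > 0")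
    case True
    then have "w \<in> P" using that P_def by auto
    then have "t * c w \<le> d w" using tle[of w] True by (simp add: pos_le_divide_eq)
    then show ?thesis by (simp add: d'_def)
  next
    case False
    have "t > 0" using w0 dpos P_def by auto
    then have "t * c w \<le> 0" using False by (simp add: mult_nonneg_nonpos)
    moreover have "d w > 0" using dpos that by blast
    ultimately show ?thesis by (simp add: d'_def)
  qed
  have d'0: "d' w0 = 0" using w0 P_def by (simp add: d'_def)
  define Y where "Y = {w\<in>Z. d' w > 0}"
  have "(\<Sum>w\<in>Z. d' w *\<^sub>R w) = v"
  proof -
    have "(\<Sum>w\<in>Z. d' w *\<^sub>R w) = (\<Sum>w\<in>Z. d w *\<^sub>R w - t *\<^sub>R (c w *\<^sub>R w))"
      by (rule sum.cong) (simp_all add: d'_def scaleR_diff_left)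
    also have "\<dots> = (\<Sum>w\<in>Z. d w *\<^sub>R w) - t *\<^sub>R (\<Sum>w\<in>Z. c w *\<^sub>R w)"
      by (simp add: sum_subtractf scaleR_sum_right)
    finally show ?thesis using dsum c2 by simp
  qed
  moreover have "(\<Sum>w\<in>Z. d' w *\<^sub>R w) = (\<Sum>w\<in>Y. d' w *\<^sub>R w)"
  proof (rule sum.mono_neutral_right[OF fin])
    show "Y \<subseteq> Z" by (auto simp: Y_def)
    show "\<forall>i\<in>Z - Y. d' i *\<^sub>R i = 0"
    proof
      fix i assume "i \<in> Z - Y"
      then have "d' i = 0" using d'nn[of i] by (simp add: Y_def)
      then show "d' i *\<^sub>R i = 0" by simp
    qed
  qed
  moreover have "Y \<subset> Z"
  proof -
    have "w0 \<in> Z" "w0 \<notin> Y" using w0 d'0 by (auto simp: P_def Y_def)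
    then show ?thesis by (auto simp: Y_def)
  qed
  moreover have "\<forall>w\<in>Y. d' w > 0" by (simp add: Y_def)
  ultimately show ?thesis by metis
qed

theorem proposition6p2:
  fixes B :: "'n::finite set set" and S' :: "'n set" and z :: "real^'n"
  assumes "minimal_balanced_collection B"
    and "S' \<in> B"
    and "z \<in> nonneg_orthant"
    and "z \<noteq> charvec S'"
    and "\<And>i. z $ i > 0 \<longleftrightarrow> i \<in> S'"
    and "minimal_balanced_set (charvec ` (B - {S'}) \<union> {z})"
  shows "(\<exists>y \<in> orthogonal_comp (span (charvec ` (B - {S'}))). z \<bullet> y \<noteq> 0)
         \<and> z \<in> span (charvec ` B)"
proof -
  define Z where "Z = charvec ` (B - {S'}) \<union> {z}"
  have bs: "balanced_set Z" and mn: "\<And>Y. Y \<subset> Z \<Longrightarrow> \<not> balanced_set Y"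
    using assms(6) unfolding minimal_balanced_set_def Z_def by auto
  obtain d where dpos: "\<forall>w\<in>Z. d w > 0" and dsum: "(\<Sum>w\<in>Z. d w *\<^sub>R w) = charvec UNIV"
    and finZ: "finite Z" and Zsub: "Z \<subseteq> nonneg_orthant - {0}"
    using bs unfolding balanced_set_def by auto
  have znot: "z \<notin> charvec ` (B - {S'})"
  proof
    assume "z \<in> charvec ` (B - {S'})"
    then obtain T where T: "T \<in> B" "T \<noteq> S'" "z = charvec T" by auto
    have "\<And>i. z $ i > 0 \<longleftrightarrow> i \<in> T" using T(3) by (simp add: charvec_def)
    then have "T = S'" using assms(5) by blast
    then show False using T by simp
  qed
  have zW: "z \<notin> span (charvec ` (B - {S'}))"
  proof
    assume "z \<in> span (charvec ` (B - {S'}))"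
    then have "z \<in> span (Z - {z})" using znot by (simp add: Z_def)
    moreover have "z \<in> Z" by (simp add: Z_def)
    ultimately have "dependent Z" unfolding dependent_def by blast
    then obtain Y d' where Y: "Y \<subset> Z" "\<forall>w\<in>Y. d' w > 0" "(\<Sum>w\<in>Y. d' w *\<^sub>R w) = charvec UNIV"
      using perturb[OF finZ dpos dsum] by blast
    have "Y \<subseteq> Z" using Y(1) by (rule psubset_imp_subset)
    then have "finite Y" "Y \<subseteq> nonneg_orthant - {0}" using finZ Zsub finite_subset by auto
    then have "balanced_set Y" unfolding balanced_set_def
      using Y(2,3) by blast
    then show False using mn Y(1) by blast
  qed
  obtain p w where p: "p \<in> span (charvec ` (B - {S'}))"
    and w: "\<And>x. x \<in> span (charvec ` (B - {S'})) \<Longrightarrow> orthogonal w x" and zpw: "z = p + w"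
    using orthogonal_subspace_decomp_exists by blast
  have "w \<noteq> 0" using zW p zpw by auto
  have "z \<bullet> w = w \<bullet> w" using w[OF p] zpw
    by (simp add: inner_add_left inner_add_right orthogonal_def inner_commute)
  then have "z \<bullet> w \<noteq> 0" using \<open>w \<noteq> 0\<close> by simp
  moreover have "w \<in> orthogonal_comp (span (charvec ` (B - {S'})))"
    using w unfolding orthogonal_comp_def by (auto simp: orthogonal_commute)
  ultimately have A: "\<exists>y \<in> orthogonal_comp (span (charvec ` (B - {S'}))). z \<bullet> y \<noteq> 0" by blast
  obtain lam where lam: "(\<Sum>S\<in>B. lam S *\<^sub>R charvec S) = charvec (UNIV::'n set)"
    using assms(1) unfolding minimal_balanced_collection_def balanced_collection_def by auto
  have "charvec UNIV \<in> span (charvec ` B)"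
    unfolding lam[symmetric]
    by (intro span_sum span_scale span_base) auto
  have sp1: "(\<Sum>w\<in>charvec ` (B - {S'}). d w *\<^sub>R w) \<in> span (charvec ` B)"
    by (intro span_sum span_scale span_base) auto
  have "charvec UNIV = (\<Sum>w\<in>charvec ` (B - {S'}). d w *\<^sub>R w) + d z *\<^sub>R z"
    using dsum znot finZ unfolding Z_def
    by (subst (asm) sum.union_disjoint) auto
  then have "d z *\<^sub>R z = charvec UNIV - (\<Sum>w\<in>charvec ` (B - {S'}). d w *\<^sub>R w)" by simp
  then have "d z *\<^sub>R z \<in> span (charvec ` B)"
    using sp1 \<open>charvec UNIV \<in> span (charvec ` B)\<close> by (simp add: span_diff)
  then have "(1 / d z) *\<^sub>R (d z *\<^sub>R z) \<in> span (charvec ` B)" by (rule span_scale)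
  moreover have "d z > 0" using dpos Z_def by auto
  ultimately have "z \<in> span (charvec ` B)" by simp
  with A show ?thesis by blast
qed

end
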